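(* Let $A\in\mathbb{Z}^{d\times n}$, $\mathbf{b}\in\mathbb{Z}^d$, $\mathbf{c}\in\mathbb{Z}^n$, $\mathbf{u}\in\mathbb{Z}_{\ge0}^n$, and consider the ILP $\min\{\mathbf{c}^\top\mathbf{x} : A\mathbf{x}=\mathbf{b},\ \mathbf{0}\le\mathbf{x}\le\mathbf{u},\ \mathbf{x}\in\mathbb{Z}^n\}$. Then: (i) for every feasible $\mathbf{x}$ and every $\mathbf{z}\in\mathbb{Z}^n\setminus\{\mathbf{0}\}$ with $A\mathbf{z}=\mathbf{0}$ and $\mathbf{x}+\mathbf{z}$ feasible, there exists $\mathbf{g}\in\mathcal{G}(A)$ with $\mathbf{x}+\mathbf{g}$ feasible and $-\mathbf{c}^\top\mathbf{g}/\|\mathbf{g}\|_1\ge-\mathbf{c}^\top\mathbf{z}/\|\mathbf{z}\|_1$; hence a discrete steepest-descent direction is a steepest-descent direction among all nonzero integer directions applicable at $\mathbf{x}$; (ii) from any feasible solution $\mathbf{x}_0$, every sequence of discrete steepest-descent augmentations reaches an optimal solution after at most $|\mathcal{G}(A)|$ augmentations.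
   Context: Feasible solutions are the $\mathbf{x}\in\mathbb{Z}^n$ with $A\mathbf{x}=\mathbf{b}$, $\mathbf{0}\le\mathbf{x}\le\mathbf{u}$. For $\mathbf{v},\mathbf{w}\in\mathbb{R}^n$ write $\mathbf{v}\sqsubseteq\mathbf{w}$ if $v_iw_i\ge0$ and $|v_i|\le|w_i|$ for all $i$. The Graver basis $\mathcal{G}(A)$ is the set of $\sqsubseteq$-minimal elements of $(\ker(A)\cap\mathbb{Z}^n)\setminus\{\mathbf{0}\}$. Discrete steepest-descent augmentation: given a feasible $\mathbf{x}_k$, choose $\mathbf{z}\in\mathcal{G}(A)$ maximizing $-\mathbf{c}^\top\mathbf{z}/\|\mathbf{z}\|_1$ among all $\mathbf{z}\in\mathcal{G}(A)$ with $\mathbf{x}_k+\mathbf{z}$ feasible; if this maximum is positive, let $\alpha$ be the largest integer with $\mathbf{x}_k+\alpha\mathbf{z}$ feasible and set $\mathbf{x}_{k+1}:=\mathbf{x}_k+\alpha\mathbf{z}$, otherwise stop. *)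

theory Defs
  imports "HOL-Analysis.Analysis"
begin

definition feasible :: "int ^ 'n ^ 'd \<Rightarrow> int ^ 'd \<Rightarrow> int ^ 'n \<Rightarrow> int ^ 'n \<Rightarrow> bool" where
  "feasible A b u x \<longleftrightarrow> A *v x = b \<and> (\<forall>i. 0 \<le> x $ i \<and> x $ i \<le> u $ i)"

definition cost :: "int ^ 'n \<Rightarrow> int ^ 'n \<Rightarrow> int" where
  "cost c x = (\<Sum>i\<in>UNIV. c $ i * x $ i)"

definition norm1 :: "int ^ 'n \<Rightarrow> int" where
  "norm1 z = (\<Sum>i\<in>UNIV. \<bar>z $ i\<bar>)"

definition ratio :: "int ^ 'n \<Rightarrow> int ^ 'n \<Rightarrow> real" where
  "ratio c z = - real_of_int (cost c z) / real_of_int (norm1 z)"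

definition conformal :: "int ^ 'n \<Rightarrow> int ^ 'n \<Rightarrow> bool" (infix "\<sqsubseteq>" 50) where
  "v \<sqsubseteq> w \<longleftrightarrow> (\<forall>i. v $ i * w $ i \<ge> 0 \<and> \<bar>v $ i\<bar> \<le> \<bar>w $ i\<bar>)"

definition graver :: "int ^ 'n ^ 'd \<Rightarrow> (int ^ 'n) set" where
  "graver A = {g. A *v g = 0 \<and> g \<noteq> 0 \<and>
      \<not> (\<exists>h. A *v h = 0 \<and> h \<noteq> 0 \<and> h \<sqsubseteq> g \<and> h \<noteq> g)}"

definition optimal :: "int ^ 'n ^ 'd \<Rightarrow> int ^ 'd \<Rightarrow> int ^ 'n \<Rightarrow> int ^ 'n \<Rightarrow> int ^ 'n \<Rightarrow> bool" where
  "optimal A b u c x \<longleftrightarrow> feasible A b u x \<and> (\<forall>y. feasible A b u y \<longrightarrow> cost c x \<le> cost c y)"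

definition dsd_step :: "int ^ 'n ^ 'd \<Rightarrow> int ^ 'd \<Rightarrow> int ^ 'n \<Rightarrow> int ^ 'n \<Rightarrow> int ^ 'n \<Rightarrow> int ^ 'n \<Rightarrow> bool" where
  "dsd_step A b u c x x' \<longleftrightarrow> feasible A b u x \<and>
     (\<exists>z \<in> graver A. feasible A b u (x + z)
        \<and> (\<forall>g \<in> graver A. feasible A b u (x + g) \<longrightarrow> ratio c g \<le> ratio c z)
        \<and> ratio c z > 0
        \<and> (\<exists>\<alpha>::int. feasible A b u (x + of_int \<alpha> *s z)
              \<and> (\<forall>\<beta>::int. feasible A b u (x + of_int \<beta> *s z) \<longrightarrow> \<beta> \<le> \<alpha>)
              \<and> x' = x + of_int \<alpha> *s z))"

definition dsd_stops :: "int ^ 'n ^ 'd \<Rightarrow> int ^ 'd \<Rightarrow> int ^ 'n \<Rightarrow> int ^ 'n \<Rightarrow> int ^ 'n \<Rightarrow> bool" where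
  "dsd_stops A b u c x \<longleftrightarrow>
     \<not> (\<exists>z \<in> graver A. feasible A b u (x + z) \<and> ratio c z > 0)"

end

theory Submission
  imports Defs
begin


lemma mv_add: "(A::int^'n^'d) *v (x + y) = A *v x + A *v y"
  by (simp add: vec_eq_iff matrix_vector_mult_def algebra_simps sum.distrib)
lemma mv_diff: "(A::int^'n^'d) *v (x - y) = A *v x - A *v y"
  by (simp add: vec_eq_iff matrix_vector_mult_def algebra_simps sum_subtractf)
lemma mv_smult: "(A::int^'n^'d) *v (k *s y) = k *s (A *v y)"
  by (simp add: vec_eq_iff matrix_vector_mult_def algebra_simps sum_distrib_left)

lemma cost_add: "cost c (x + y) = cost c x + cost c y"
  by (simp add: cost_def algebra_simps sum.distrib)
lemma cost_diff: "cost c (x - y) = cost c x - cost c y"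
  by (simp add: cost_def algebra_simps sum_subtractf)
lemma cost_smult: "cost c (k *s y) = k * cost c y"
  by (simp add: cost_def algebra_simps sum_distrib_left)
lemma cost_zero: "cost c 0 = 0" by (simp add: cost_def)
lemma norm1_zero: "norm1 0 = 0" by (simp add: norm1_def)

lemma norm1_nonneg: "norm1 z \<ge> 0" by (simp add: norm1_def sum_nonneg)
lemma norm1_pos: "z \<noteq> 0 \<Longrightarrow> norm1 z > 0"
proof -
  assume "z \<noteq> 0"
  then obtain i where "z $ i \<noteq> 0" by (auto simp: vec_eq_iff)
  then show ?thesis unfolding norm1_def by (intro sum_pos2[where i=i]) auto
qed
lemma norm1_add_le: "norm1 (a + b) \<le> norm1 a + norm1 b"
  unfolding norm1_def sum.distrib[symmetric] by (rule sum_mono) (simp add: abs_triangle_ineq)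
lemma norm1_smult: "norm1 (k *s a) = \<bar>k\<bar> * norm1 a"
  by (simp add: norm1_def abs_mult sum_distrib_left)

lemma conf_refl: "z \<sqsubseteq> z" by (simp add: conformal_def)

lemma conf_trans: "g \<sqsubseteq> h \<Longrightarrow> h \<sqsubseteq> z \<Longrightarrow> g \<sqsubseteq> z"
  unfolding conformal_def zero_le_mult_iff
  by (smt (verit))

lemma conf_coord: "h \<sqsubseteq> z \<Longrightarrow> (0 \<le> h $ i \<and> 0 \<le> z $ i \<or> h $ i \<le> 0 \<and> z $ i \<le> 0) \<and> \<bar>h $ i\<bar> \<le> \<bar>z $ i\<bar>"
  unfolding conformal_def zero_le_mult_iff by blast

lemma conf_diff: "h \<sqsubseteq> z \<Longrightarrow> (z - h) \<sqsubseteq> z"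
  unfolding conformal_def[of "z - h"] zero_le_mult_iff
proof (intro allI)
  fix i assume "h \<sqsubseteq> z"
  from conf_coord[OF this, of i] show "(0 \<le> (z - h) $ i \<and> 0 \<le> z $ i \<or> (z - h) $ i \<le> 0 \<and> z $ i \<le> 0) \<and> \<bar>(z - h) $ i\<bar> \<le> \<bar>z $ i\<bar>"
    by (simp only: vector_minus_component, arith)
qed

lemma conf_norm: "h \<sqsubseteq> z \<Longrightarrow> norm1 z = norm1 h + norm1 (z - h)"
  unfolding norm1_def sum.distrib[symmetric]
proof (rule sum.cong)
  fix i assume "h \<sqsubseteq> z"
  from conf_coord[OF this, of i] show "\<bar>z $ i\<bar> = \<bar>h $ i\<bar> + \<bar>(z - h) $ i\<bar>"
    by (simp only: vector_minus_component, arith)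
qed simp

lemma tri_conf: assumes "norm1 a + norm1 b \<le> norm1 (a + b)" shows "a \<sqsubseteq> a + b"
proof -
  have eq: "\<bar>a $ t + b $ t\<bar> = \<bar>a $ t\<bar> + \<bar>b $ t\<bar>" for t
  proof (rule ccontr)
    assume "\<bar>a $ t + b $ t\<bar> \<noteq> \<bar>a $ t\<bar> + \<bar>b $ t\<bar>"
    then have "\<bar>a $ t + b $ t\<bar> < \<bar>a $ t\<bar> + \<bar>b $ t\<bar>" using abs_triangle_ineq[of "a$t" "b$t"] by linarith
    then have "(\<Sum>i\<in>UNIV. \<bar>a $ i + b $ i\<bar>) < (\<Sum>i\<in>UNIV. \<bar>a $ i\<bar> + \<bar>b $ i\<bar>)"
      by (intro sum_strict_mono_ex1) (simp_all add: abs_triangle_ineq, blast)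
    then show False using assms by (simp add: norm1_def sum.distrib)
  qed
  show ?thesis unfolding conformal_def
  proof
    fix t
    from eq[of t] show "0 \<le> a $ t * (a + b) $ t \<and> \<bar>a $ t\<bar> \<le> \<bar>(a + b) $ t\<bar>"
      unfolding zero_le_mult_iff vector_add_component by arith
  qed
qed

lemma conf_feas:
  assumes "feasible A b u x" "feasible A b u (x + z)" "A *v g = 0" "g \<sqsubseteq> z"
  shows "feasible A b u (x + g)"
  using assms unfolding feasible_def conformal_def zero_le_mult_iff
  by (smt (verit) mv_add vector_add_component add.right_neutral)

lemma mediant:
  fixes a b p q :: real assumes "p > 0" "q > 0"
  shows "a / p \<ge> (a + b) / (p + q) \<or> b / q \<ge> (a + b) / (p + q)"
proof (rule ccontr)
  let ?R = "(a + b) / (p + q)"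
  assume "\<not> ?thesis"
  then have "a < ?R * p" "b < ?R * q" using assms by (auto simp: divide_less_eq not_le)
  then have "a + b < ?R * p + ?R * q" by linarith
  moreover have "?R * (p + q) = a + b" using assms by simp
  moreover have "?R * p + ?R * q = ?R * (p + q)" by (rule distrib_left[symmetric])
  ultimately show False by linarith
qed

lemma graver_below:
  fixes A :: "int^'n^'d"
  shows "z \<noteq> 0 \<Longrightarrow> A *v z = 0 \<Longrightarrow> \<exists>g\<in>graver A. g \<sqsubseteq> z \<and> ratio c g \<ge> ratio c z"
proof (induction "nat (norm1 z)" arbitrary: z rule: less_induct)
  case less
  show ?case
  proof (cases "z \<in> graver A")
    case True then show ?thesis using conf_refl by blast
  next
    case False
    then obtain h where h: "A *v h = 0" "h \<noteq> 0" "h \<sqsubseteq> z" "h \<noteq> z"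
      using less.prems by (auto simp: graver_def)
    define k where "k = z - h"
    have k: "A *v k = 0" "k \<noteq> 0" "k \<sqsubseteq> z"
      using h less.prems conf_diff[OF h(3)] by (auto simp: k_def mv_diff)
    have nz: "norm1 z = norm1 h + norm1 k" using conf_norm[OF h(3)] k_def by simp
    have ph: "norm1 h > 0" "norm1 k > 0" using norm1_pos h(2) k(2) by auto
    have lt: "nat (norm1 h) < nat (norm1 z)" "nat (norm1 k) < nat (norm1 z)" using nz ph by auto
    have cz: "cost c z = cost c h + cost c k" using cost_add[of c h k] by (simp add: k_def)
    have "ratio c h \<ge> ratio c z \<or> ratio c k \<ge> ratio c z"
      using mediant[of "real_of_int (norm1 h)" "real_of_int (norm1 k)" "- real_of_int (cost c h)" "- real_of_int (cost c k)"] ph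
      unfolding ratio_def nz cz by (simp add: add_divide_distrib[symmetric] algebra_simps)
    then show ?thesis
    proof
      assume r: "ratio c h \<ge> ratio c z"
      obtain g where "g \<in> graver A" "g \<sqsubseteq> h" "ratio c g \<ge> ratio c h" using less.hyps[OF lt(1) h(2) h(1)] by blast
      then show ?thesis using r conf_trans h(3) by fastforce
    next
      assume r: "ratio c k \<ge> ratio c z"
      obtain g where "g \<in> graver A" "g \<sqsubseteq> k" "ratio c g \<ge> ratio c k" using less.hyps[OF lt(2) k(2) k(1)] by blast
      then show ?thesis using r conf_trans k(3) by fastforce
    qed
  qed
qed

lemma part1:
  fixes A :: "int^'n^'d"
  assumes "feasible A b u x" "z \<noteq> 0" "A *v z = 0" "feasible A b u (x + z)"
  shows "\<exists>g\<in>graver A. feasible A b u (x + g) \<and> ratio c g \<ge> ratio c z"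
proof -
  obtain g where g: "g \<in> graver A" "g \<sqsubseteq> z" "ratio c g \<ge> ratio c z"
    using graver_below[OF assms(2,3)] by blast
  then have "A *v g = 0" by (simp add: graver_def)
  then show ?thesis using g conf_feas[OF assms(1,4)] by blast
qed



lemma nat_seq_incsub:
  fixes s :: "nat \<Rightarrow> nat"
  shows "\<exists>r::nat\<Rightarrow>nat. strict_mono r \<and> (\<forall>m n. m \<le> n \<longrightarrow> s (r m) \<le> s (r n))"
proof -
  obtain f where f: "strict_mono f" "monoseq (\<lambda>n. s (f n))" using seq_monosub by blast
  show ?thesis
  proof (cases "incseq (\<lambda>n. s (f n))")
    case True
    then have X: "\<forall>m n. m \<le> n \<longrightarrow> s (f m) \<le> s (f n)" by (simp add: incseq_def)
    show ?thesis by (rule exI[where x=f]) (use f(1) X in simp)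
  next
    case False
    then have d: "decseq (\<lambda>n. s (f n))" using f(2) monoseq_iff by blast
    obtain N where N: "\<forall>n. s (f N) \<le> s (f n)"
      using ex_has_least_nat[of "\<lambda>_. True" 0 "\<lambda>n. s (f n)"] by blast
    have c: "s (f (n + N)) = s (f N)" for n
    proof -
      have "s (f (n + N)) \<le> s (f N)" using d by (simp add: decseq_def)
      moreover have "s (f N) \<le> s (f (n + N))" using N by blast
      ultimately show ?thesis by (rule antisym)
    qed
    have Y: "strict_mono (\<lambda>n. f (n + N))"
      unfolding strict_mono_def using f(1) by (simp add: strict_mono_def)
    have Z: "\<forall>m n. m \<le> n \<longrightarrow> s (f (m + N)) \<le> s (f (n + N))" by (simp add: c)
    show ?thesis by (rule exI[where x="\<lambda>n. f (n + N)"]) (use Y Z in simp)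
  qed
qed

lemma dickson_fin:
  fixes f :: "nat \<Rightarrow> 'a \<Rightarrow> nat"
  shows "finite S \<Longrightarrow> \<exists>r::nat\<Rightarrow>nat. strict_mono r \<and> (\<forall>t\<in>S. \<forall>m n. m \<le> n \<longrightarrow> f (r m) t \<le> f (r n) t)"
proof (induction S rule: finite_induct)
  case empty
  have "strict_mono (id :: nat \<Rightarrow> nat)" by (simp add: strict_mono_def)
  then show ?case by (intro exI[where x="id :: nat \<Rightarrow> nat"]) (simp add: id_def)
next
  case (insert a S)
  then obtain r :: "nat \<Rightarrow> nat" where r: "strict_mono r" "\<forall>t\<in>S. \<forall>m n. m \<le> n \<longrightarrow> f (r m) t \<le> f (r n) t" by blast
  obtain r' :: "nat \<Rightarrow> nat" where r': "strict_mono r'" "\<forall>m n. m \<le> n \<longrightarrow> f (r (r' m)) a \<le> f (r (r' n)) a"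
    using nat_seq_incsub[of "\<lambda>n. f (r n) a"] by blast
  have "strict_mono (r \<circ> r')" using r(1) r'(1) by (rule strict_mono_o)
  moreover have "\<forall>t\<in>insert a S. \<forall>m n. m \<le> n \<longrightarrow> f ((r \<circ> r') m) t \<le> f ((r \<circ> r') n) t"
  proof (intro ballI allI impI)
    fix t m n assume t: "t \<in> insert a S" and mn: "(m::nat) \<le> n"
    show "f ((r \<circ> r') m) t \<le> f ((r \<circ> r') n) t"
    proof (cases "t = a")
      case True then show ?thesis using r'(2) mn by simp
    next
      case False
      then have "t \<in> S" using t by simp
      moreover have "r' m \<le> r' n" using strict_mono_less_eq[OF r'(1)] mn by simp
      ultimately show ?thesis using r(2) by simp
    qed
  qed
  ultimately show ?case by (intro exI[where x="r \<circ> r'"] conjI)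
qed

lemma dickson:
  fixes f :: "nat \<Rightarrow> 'a::finite \<Rightarrow> nat"
  shows "\<exists>i j. i < j \<and> (\<forall>t. f i t \<le> f j t)"
proof -
  obtain r :: "nat \<Rightarrow> nat" where r: "strict_mono r" "\<forall>t\<in>UNIV. \<forall>m n. m \<le> n \<longrightarrow> f (r m) t \<le> f (r n) t"
    using dickson_fin[of UNIV f] by auto
  have "r 0 < r 1" using r(1) by (simp add: strict_mono_def)
  moreover have "\<forall>t. f (r 0) t \<le> f (r 1) t" using r(2) by simp
  ultimately show ?thesis by (intro exI[where x="r 0"] exI[where x="r 1"] conjI)
qed

lemma graver_finite: "finite (graver (A::int^'n^'d))"
proof (rule ccontr)
  assume inf: "infinite (graver A)"
  define sg where "sg = (\<lambda>g::int^'n. \<lambda>t. (0 < g $ t, g $ t < 0))"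
  have "finite (sg ` graver A)" by (rule finite_subset[OF subset_UNIV]) simp
  then obtain g0 where "g0 \<in> graver A" "infinite {g\<in>graver A. sg g = sg g0}"
    using pigeonhole_infinite[OF inf] by blast
  then obtain e :: "nat \<Rightarrow> int^'n" where e: "inj e" "range e \<subseteq> {g \<in> graver A. sg g = sg g0}"
    using infinite_countable_subset by blast
  obtain i j where ij: "i < j" "\<forall>t. nat \<bar>e i $ t\<bar> \<le> nat \<bar>e j $ t\<bar>"
    using dickson[of "\<lambda>n t. nat \<bar>e n $ t\<bar>"] by blast
  have "e i \<in> {g \<in> graver A. sg g = sg g0}" "e j \<in> {g \<in> graver A. sg g = sg g0}"
    using e(2) by blast+
  then have s: "sg (e i) = sg (e j)" by simp
  have "e i \<sqsubseteq> e j" unfolding conformal_def zero_le_mult_iff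
  proof
    fix t
    have "(0 < e i $ t) = (0 < e j $ t)" "(e i $ t < 0) = (e j $ t < 0)"
      using fun_cong[OF s, of t] by (auto simp: sg_def)
    moreover have "\<bar>e i $ t\<bar> \<le> \<bar>e j $ t\<bar>"
      using ij(2)[rule_format, of t] by (simp add: nat_le_eq_zle)
    ultimately show "(0 \<le> e i $ t \<and> 0 \<le> e j $ t \<or> e i $ t \<le> 0 \<and> e j $ t \<le> 0) \<and> \<bar>e i $ t\<bar> \<le> \<bar>e j $ t\<bar>"
      by (smt (verit))
  qed
  moreover have "e i \<noteq> e j" using e(1) ij(1) by (auto dest: injD)
  moreover have "e i \<in> graver A" "e j \<in> graver A" using e(2) by auto
  ultimately show False unfolding graver_def by blast
qed



lemma of_int_int_id: "(of_int (x::int) :: int) = x" by simp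

lemma bound_lemma:
  fixes A :: "int^'n^'d"
  assumes "feasible A b u x" "\<forall>g\<in>graver A. feasible A b u (x + g) \<longrightarrow> ratio c g \<le> r"
    "A *v v = 0" "feasible A b u (x + v)"
  shows "- real_of_int (cost c v) \<le> r * real_of_int (norm1 v)"
proof (cases "v = 0")
  case True then show ?thesis by (simp add: cost_zero norm1_zero)
next
  case False
  obtain g where "g \<in> graver A" "feasible A b u (x + g)" "ratio c g \<ge> ratio c v"
    using part1[OF assms(1) False assms(3,4)] by blast
  then have "ratio c v \<le> r" using assms(2) by fastforce
  moreover have "real_of_int (norm1 v) > 0" using norm1_pos[OF False] by simp
  ultimately show ?thesis unfolding ratio_def
    using pos_divide_le_eq[of "real_of_int (norm1 v)" "- real_of_int (cost c v)" r] by simp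
qed

lemma ratio_mult: "z \<noteq> 0 \<Longrightarrow> - real_of_int (cost c z) = ratio c z * real_of_int (norm1 z)"
  using norm1_pos[of z] unfolding ratio_def by simp

lemma part2:
  fixes A :: "int^'n^'d" and xs :: "nat \<Rightarrow> int^'n"
  assumes x0: "feasible A b u (xs 0)"
    and steps: "\<forall>i<k. dsd_step A b u c (xs i) (xs (Suc i))"
  shows "k \<le> card (graver A) \<and> (dsd_stops A b u c (xs k) \<longrightarrow> optimal A b u c (xs k))"
proof -
  have "\<forall>i. \<exists>(z::int^'n) (\<alpha>::int). i < k \<longrightarrow> (z \<in> graver A \<and> feasible A b u (xs i + z)
        \<and> (\<forall>g \<in> graver A. feasible A b u (xs i + g) \<longrightarrow> ratio c g \<le> ratio c z)
        \<and> ratio c z > 0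
        \<and> feasible A b u (xs i + \<alpha> *s z)
        \<and> (\<forall>\<beta>::int. feasible A b u (xs i + \<beta> *s z) \<longrightarrow> \<beta> \<le> \<alpha>)
        \<and> xs (Suc i) = xs i + \<alpha> *s z)"
    using steps unfolding dsd_step_def of_int_int_id Bex_def by blast
  then obtain z :: "nat \<Rightarrow> int^'n" and \<alpha> :: "nat \<Rightarrow> int" where za: "\<forall>i. i < k \<longrightarrow> (z i \<in> graver A \<and> feasible A b u (xs i + z i)
        \<and> (\<forall>g \<in> graver A. feasible A b u (xs i + g) \<longrightarrow> ratio c g \<le> ratio c (z i))
        \<and> ratio c (z i) > 0
        \<and> feasible A b u (xs i + \<alpha> i *s z i)
        \<and> (\<forall>\<beta>::int. feasible A b u (xs i + \<beta> *s z i) \<longrightarrow> \<beta> \<le> \<alpha> i)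
        \<and> xs (Suc i) = xs i + \<alpha> i *s z i)"
    by metis
  have zg: "z i \<in> graver A" if "i < k" for i using za that by blast
  have zf: "feasible A b u (xs i + z i)" if "i < k" for i using za that by blast
  have zmax: "\<forall>g \<in> graver A. feasible A b u (xs i + g) \<longrightarrow> ratio c g \<le> ratio c (z i)" if "i < k" for i
    using za that by blast
  have zpos: "ratio c (z i) > 0" if "i < k" for i using za that by blast
  have af: "feasible A b u (xs i + \<alpha> i *s z i)" if "i < k" for i using za that by blast
  have amax: "\<And>\<beta>. feasible A b u (xs i + \<beta> *s z i) \<Longrightarrow> \<beta> \<le> \<alpha> i" if "i < k" for i
    using za that by blast
  have xsuc: "xs (Suc i) = xs i + \<alpha> i *s z i" if "i < k" for i using za that by blast
  have kern: "A *v z i = 0" if "i < k" for i using zg[OF that] by (simp add: graver_def)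
  have nz: "z i \<noteq> 0" if "i < k" for i using zg[OF that] by (simp add: graver_def)
  have age: "1 \<le> \<alpha> i" if "i < k" for i using amax[OF that, of 1] zf[OF that] by simp
  have feas: "feasible A b u (xs i)" if "i \<le> k" for i
  proof (cases "i < k")
    case True then show ?thesis using steps by (simp add: dsd_step_def)
  next
    case False
    then have "i = k" using that by simp
    show ?thesis
    proof (cases k)
      case 0 then show ?thesis using x0 \<open>i = k\<close> by simp
    next
      case (Suc j)
      then show ?thesis using af[of j] xsuc[of j] \<open>i = k\<close> by simp
    qed
  qed
  have rz: "- real_of_int (cost c (z i)) = ratio c (z i) * real_of_int (norm1 (z i))" if "i < k" for i
    using ratio_mult[OF nz[OF that]] .
  have bnd: "- real_of_int (cost c v) \<le> ratio c (z i) * real_of_int (norm1 v)"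
    if "i < k" "A *v v = 0" "feasible A b u (xs i + v)" for i v
    using bound_lemma[OF feas[of i] zmax[OF that(1)] that(2,3)] that(1) by simp
  have mono1: "ratio c (z (Suc i)) \<le> ratio c (z i)" if "Suc i < k" for i
  proof -
    have ik: "i < k" using that by simp
    define v where "v = \<alpha> i *s z i + z (Suc i)"
    define R where "R = ratio c (z i)"
    have "xs i + v = xs (Suc i) + z (Suc i)" using xsuc[OF ik] by (simp add: v_def algebra_simps)
    then have fv: "feasible A b u (xs i + v)" using zf[OF that] by simp
    have kv: "A *v v = 0" by (simp add: v_def mv_add mv_smult kern ik that)
    have e1: "- real_of_int (cost c v) \<le> R * real_of_int (norm1 v)" using bnd[OF ik kv fv] by (simp add: R_def)
    have "norm1 v \<le> \<alpha> i * norm1 (z i) + norm1 (z (Suc i))"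
      using norm1_add_le[of "\<alpha> i *s z i" "z (Suc i)"] norm1_smult[of "\<alpha> i" "z i"] age[OF ik]
      by (simp add: v_def)
    then have e2: "real_of_int (norm1 v) \<le> real_of_int (\<alpha> i) * real_of_int (norm1 (z i)) + real_of_int (norm1 (z (Suc i)))"
      by (metis of_int_add of_int_le_iff of_int_mult)
    have Rpos: "R > 0" using zpos[OF ik] by (simp add: R_def)
    have e3: "R * real_of_int (norm1 v) \<le> R * (real_of_int (\<alpha> i) * real_of_int (norm1 (z i))) + R * real_of_int (norm1 (z (Suc i)))"
      using mult_left_mono[OF e2, of R] Rpos by (simp add: distrib_left)
    have e4: "real_of_int (cost c v) = real_of_int (\<alpha> i) * real_of_int (cost c (z i)) + real_of_int (cost c (z (Suc i)))"
      by (simp add: v_def cost_add cost_smult)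
    have e5: "real_of_int (\<alpha> i) * (- real_of_int (cost c (z i))) = R * (real_of_int (\<alpha> i) * real_of_int (norm1 (z i)))"
      using rz[OF ik] by (simp add: R_def)
    have "- real_of_int (cost c (z (Suc i))) \<le> R * real_of_int (norm1 (z (Suc i)))"
      using e1 e3 e4 e5 by (simp add: algebra_simps)
    moreover have "real_of_int (norm1 (z (Suc i))) > 0" using norm1_pos[OF nz[OF that]] by simp
    ultimately show ?thesis unfolding R_def ratio_def[of c "z (Suc i)"]
      using pos_divide_le_eq[of "real_of_int (norm1 (z (Suc i)))" "- real_of_int (cost c (z (Suc i)))" "ratio c (z i)"] by simp
  qed
  have mono: "ratio c (z j) \<le> ratio c (z i)" if "i \<le> j" "j < k" for i j
    using that
  proof (induction j)
    case 0 then show ?case by simp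
  next
    case (Suc j)
    show ?case
    proof (cases "i = Suc j")
      case True then show ?thesis by simp
    next
      case False
      then have "i \<le> j" using Suc.prems by simp
      then have "ratio c (z j) \<le> ratio c (z i)" using Suc.IH Suc.prems by simp
      then show ?thesis using mono1[of j] Suc.prems by simp
    qed
  qed
  have noinj: "z i \<noteq> z m" if im: "i < m" "m < k" for i m
  proof
    assume eq: "z i = z m"
    have ik: "i < k" using im by simp
    define R where "R = ratio c (z i)"
    have Rpos: "R > 0" using zpos[OF ik] by (simp add: R_def)
    have rr: "R \<le> ratio c (z j)" if "j \<le> m" for j
      using mono[of j m] that im eq by (simp add: R_def)
    have acc: "R * real_of_int (norm1 (xs p - xs (Suc i))) \<le> - real_of_int (cost c (xs p - xs (Suc i)))"
      if "Suc i \<le> p" "p \<le> m" for p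
      using that
    proof (induction p)
      case 0 then show ?case by simp
    next
      case (Suc p)
      show ?case
      proof (cases "Suc p = Suc i")
        case True then show ?thesis by (simp add: cost_zero norm1_zero)
      next
        case False
        then have pm: "Suc i \<le> p" "p < m" using Suc.prems by auto
        then have pk: "p < k" using im by simp
        define D where "D = xs p - xs (Suc i)"
        have IH: "R * real_of_int (norm1 D) \<le> - real_of_int (cost c D)"
          using Suc.IH pm by (simp add: D_def)
        have dd: "xs (Suc p) - xs (Suc i) = D + \<alpha> p *s z p"
          using xsuc[OF pk] by (simp add: D_def algebra_simps)
        have "norm1 (D + \<alpha> p *s z p) \<le> norm1 D + \<alpha> p * norm1 (z p)"
          using norm1_add_le[of D "\<alpha> p *s z p"] norm1_smult[of "\<alpha> p" "z p"] age[OF pk] by simp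
        then have n1: "real_of_int (norm1 (D + \<alpha> p *s z p)) \<le> real_of_int (norm1 D) + real_of_int (\<alpha> p) * real_of_int (norm1 (z p))"
          by (metis of_int_add of_int_le_iff of_int_mult)
        have n2: "R * real_of_int (norm1 (D + \<alpha> p *s z p)) \<le> R * real_of_int (norm1 D) + R * (real_of_int (\<alpha> p) * real_of_int (norm1 (z p)))"
          using mult_left_mono[OF n1, of R] Rpos by (simp add: distrib_left)
        have c1: "real_of_int (cost c (D + \<alpha> p *s z p)) = real_of_int (cost c D) + real_of_int (\<alpha> p) * real_of_int (cost c (z p))"
          by (simp add: cost_add cost_smult)
        have c2: "real_of_int (\<alpha> p) * (- real_of_int (cost c (z p))) = ratio c (z p) * (real_of_int (\<alpha> p) * real_of_int (norm1 (z p)))"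
          using rz[OF pk] by simp
        have c3: "R * (real_of_int (\<alpha> p) * real_of_int (norm1 (z p))) \<le> ratio c (z p) * (real_of_int (\<alpha> p) * real_of_int (norm1 (z p)))"
          using rr[of p] pm age[OF pk] norm1_nonneg[of "z p"] by (intro mult_right_mono) auto
        show ?thesis unfolding dd using IH n2 c1 c2 c3 by (simp add: algebra_simps)
      qed
    qed
    define a where "a = (\<alpha> i + 1) *s z i"
    define bb where "bb = xs m - xs (Suc i)"
    have mk: "m < k" using im by simp
    have va: "xs i + (a + bb) = xs m + z m"
      using xsuc[OF ik] eq by (simp add: a_def bb_def vector_sadd_rdistrib algebra_simps)
    have fab: "feasible A b u (xs i + (a + bb))" using va zf[OF mk] by simp
    have "a + bb = (xs m + z m) - xs i" using va by (simp add: algebra_simps)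
    then have kab: "A *v (a + bb) = 0"
      using fab feas[of i] ik va by (simp add: mv_diff feasible_def)
    have e1: "- real_of_int (cost c (a + bb)) \<le> R * real_of_int (norm1 (a + bb))"
      using bnd[OF ik kab fab] by (simp add: R_def)
    have e2: "R * real_of_int (norm1 bb) \<le> - real_of_int (cost c bb)"
      using acc[of m] im by (simp add: bb_def)
    have na: "norm1 a = (\<alpha> i + 1) * norm1 (z i)"
      using norm1_smult[of "\<alpha> i + 1" "z i"] age[OF ik] by (simp add: a_def)
    have ca: "cost c a = (\<alpha> i + 1) * cost c (z i)" unfolding a_def by (rule cost_smult)
    have "- real_of_int (cost c a) = real_of_int (\<alpha> i + 1) * (- real_of_int (cost c (z i)))"
      unfolding ca by simp
    also have "\<dots> = real_of_int (\<alpha> i + 1) * (R * real_of_int (norm1 (z i)))"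
      using rz[OF ik] by (simp only: R_def)
    also have "\<dots> = R * real_of_int (norm1 a)" unfolding na by simp
    finally have e3: "- real_of_int (cost c a) = R * real_of_int (norm1 a)" .
    have "R * (real_of_int (norm1 a) + real_of_int (norm1 bb)) \<le> R * real_of_int (norm1 (a + bb))"
      using e1 e2 e3 by (simp add: cost_add algebra_simps)
    then have "real_of_int (norm1 a) + real_of_int (norm1 bb) \<le> real_of_int (norm1 (a + bb))"
      using Rpos by (simp add: mult_le_cancel_left_pos)
    then have "norm1 a + norm1 bb \<le> norm1 (a + bb)" by linarith
    then have "a \<sqsubseteq> a + bb" by (rule tri_conf)
    moreover have "A *v a = 0" unfolding a_def mv_smult kern[OF ik] by simp
    ultimately have "feasible A b u (xs i + a)" using conf_feas[OF feas[of i] fab] ik by simp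
    then have "\<alpha> i + 1 \<le> \<alpha> i" using amax[OF ik, of "\<alpha> i + 1"] by (simp only: a_def)
    then show False by simp
  qed
  have injz: "inj_on z {..<k}"
  proof (rule inj_onI)
    fix i m assume "i \<in> {..<k}" "m \<in> {..<k}" "z i = z m"
    then show "i = m" using noinj[of i m] noinj[of m i]
      by (metis lessThan_iff linorder_neqE_nat)
  qed
  have "card {..<k} \<le> card (graver A)"
    by (rule card_inj_on_le[OF injz _ graver_finite]) (use zg in auto)
  then have P1: "k \<le> card (graver A)" by simp
  have P2: "optimal A b u c (xs k)" if st: "dsd_stops A b u c (xs k)"
    unfolding optimal_def
  proof (intro conjI allI impI)
    show fk: "feasible A b u (xs k)" using feas by simp
    fix y assume fy: "feasible A b u y"
    show "cost c (xs k) \<le> cost c y"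
    proof (rule ccontr)
      assume lt: "\<not> cost c (xs k) \<le> cost c y"
      define w where "w = y - xs k"
      have w0: "w \<noteq> 0" using lt by (auto simp: w_def)
      have kw: "A *v w = 0" using fy fk by (simp add: w_def mv_diff feasible_def)
      have fw: "feasible A b u (xs k + w)" using fy by (simp add: w_def)
      obtain g where g: "g \<in> graver A" "feasible A b u (xs k + g)" "ratio c g \<ge> ratio c w"
        using part1[OF fk w0 kw fw] by blast
      have "- real_of_int (cost c w) > 0" using lt by (simp add: w_def cost_diff)
      moreover have "real_of_int (norm1 w) > 0" using norm1_pos[OF w0] by simp
      ultimately have "ratio c w > 0" unfolding ratio_def by (rule divide_pos_pos)
      then have "ratio c g > 0" using g by simp
      then show False using st g unfolding dsd_stops_def by blast
    qed
  qed
  show ?thesis using P1 P2 by blast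
qed

theorem theorem1:
  fixes A :: "int ^ 'n ^ 'd" and b :: "int ^ 'd" and c u :: "int ^ 'n"
  assumes u_nonneg: "\<forall>i. u $ i \<ge> 0"
  shows "(\<forall>x z. feasible A b u x \<longrightarrow> z \<noteq> 0 \<longrightarrow> A *v z = 0 \<longrightarrow> feasible A b u (x + z) \<longrightarrow>
            (\<exists>g \<in> graver A. feasible A b u (x + g) \<and> ratio c g \<ge> ratio c z))
       \<and> finite (graver A)
       \<and> (\<forall>(xs :: nat \<Rightarrow> int ^ 'n) k. feasible A b u (xs 0) \<longrightarrow>
            (\<forall>i < k. dsd_step A b u c (xs i) (xs (Suc i))) \<longrightarrow>
              k \<le> card (graver A)
              \<and> (dsd_stops A b u c (xs k) \<longrightarrow> optimal A b u c (xs k)))"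
proof -
  have P1: "\<forall>x z. feasible A b u x \<longrightarrow> z \<noteq> 0 \<longrightarrow> A *v z = 0 \<longrightarrow> feasible A b u (x + z) \<longrightarrow>
            (\<exists>g \<in> graver A. feasible A b u (x + g) \<and> ratio c g \<ge> ratio c z)"
    using part1 by blast
  have P3: "\<forall>(xs :: nat \<Rightarrow> int ^ 'n) k. feasible A b u (xs 0) \<longrightarrow>
            (\<forall>i < k. dsd_step A b u c (xs i) (xs (Suc i))) \<longrightarrow>
              k \<le> card (graver A)
              \<and> (dsd_stops A b u c (xs k) \<longrightarrow> optimal A b u c (xs k))"
  proof (intro allI impI)
    fix xs :: "nat \<Rightarrow> int ^ 'n" and k
    assume "feasible A b u (xs 0)" "\<forall>i < k. dsd_step A b u c (xs i) (xs (Suc i))"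
    then show "k \<le> card (graver A) \<and> (dsd_stops A b u c (xs k) \<longrightarrow> optimal A b u c (xs k))"
      by (rule part2)
  qed
  show ?thesis using P1 P3 graver_finite[of A] by (intro conjI)
qed

end
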